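(* Let $f:\mathbb{R}^n\to\mathbb{R}$ be convex, differentiable and bounded from below, with $\nabla f$ being $L$-Lipschitz continuous ($L>0$), let $\lambda>0$, and let $H(x)=f(x)+\lambda\|x\|_0$. Let $\{x_k\},\{y_k\}$ be generated by the VMEPIHT method described in the context. Then: (1) the sequence $\{H(x_k)\}$ is non-increasing; (2) $\sum_{k=1}^\infty\|x_k-y_k\|^2<\infty$, and in particular $\|x_k-y_k\|\to 0$; (3) the index set $I(x_k)$ changes only finitely often, i.e. there is $K$ such that $I(x_k)=I(x_K)$ for all $k\geq K$.
   Context: $\|x\|_0$ denotes the number of nonzero components of $x\in\mathbb{R}^n$. For $x\in\mathbb{R}^n$, $I(x):=\{i: x_i=0\}$. For an index set $I\subseteq\{1,\dots,n\}$, $C_I:=\{x\in\mathbb{R}^n: x_i=0 \text{ for all } i\in I\}$, and $P_C(x)=\arg\min_{z\in C}\frac12\|z-x\|^2$ is the Euclidean projection onto $C$. VMEPIHT method: fix parameters $\mu>0$, $\lambda>0$ and a starting point $y_0\in\mathbb{R}^n$. For $k=0,1,2,\dots$: choose $x_k\in\arg\min_{x\in\mathbb{R}^n}\ \lambda\|x\|_0+\frac{L}{2}\|x-y_k+\frac1L\nabla f(y_k)\|^2+\frac{\mu}{2}\|x-y_k\|^2$; then choose a symmetric positive definite matrix $H_k$ and a step length $\alpha_k\ge 0$, and set $y_{k+1}=P_{C_{I(x_k)}}(x_k-\alpha_kH_k\nabla f(x_k))$, where $\alpha_k$ is chosen so that $f(y_{k+1})\leq f(x_k)$. *)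

theory Defs
  imports "HOL-Analysis.Analysis"
begin

definition l0norm :: "real ^ 'n \<Rightarrow> nat" where
  "l0norm x = card {i. x $ i \<noteq> 0}"

definition zero_idx :: "real ^ 'n \<Rightarrow> 'n set" where
  "zero_idx x = {i. x $ i = 0}"

definition coord_sub :: "'n set \<Rightarrow> (real ^ 'n) set" where
  "coord_sub I = {x. \<forall>i\<in>I. x $ i = 0}"

end

theory Submission
  imports Defs
begin

lemma descent_lemma:
  fixes f :: "real ^ 'n \<Rightarrow> real" and grad :: "real ^ 'n \<Rightarrow> real ^ 'n"
  assumes grad: "\<And>z. (f has_derivative (\<lambda>h. grad z \<bullet> h)) (at z)"
    and lipschitz: "\<And>u v. norm (grad u - grad v) \<le> L * norm (u - v)"
  shows "f x \<le> f y + grad y \<bullet> (x - y) + L / 2 * (norm (x - y))\<^sup>2"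
proof -
  define d where "d = x - y"
  define phi where "phi t = f (y + t *\<^sub>R d) - t * (grad y \<bullet> d) - L / 2 * t\<^sup>2 * (norm d)\<^sup>2" for t
  have der: "DERIV phi t :> (grad (y + t *\<^sub>R d) \<bullet> d - grad y \<bullet> d - L * t * (norm d)\<^sup>2)" for t
  proof -
    have l: "((\<lambda>t. y + t *\<^sub>R d) has_derivative (\<lambda>h. h *\<^sub>R d)) (at t)"
      by (auto intro!: derivative_eq_intros)
    have e: "(\<lambda>h. grad (y + t *\<^sub>R d) \<bullet> (h *\<^sub>R d)) = (*) (grad (y + t *\<^sub>R d) \<bullet> d)"
      by (rule ext) simp
    have "((\<lambda>t. f (y + t *\<^sub>R d)) has_derivative (\<lambda>h. grad (y + t *\<^sub>R d) \<bullet> (h *\<^sub>R d))) (at t)"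
      using has_derivative_compose[OF l grad] by simp
    hence "((\<lambda>t. f (y + t *\<^sub>R d)) has_real_derivative (grad (y + t *\<^sub>R d) \<bullet> d)) (at t)"
      unfolding e has_field_derivative_def .
    then show ?thesis unfolding phi_def
      by (auto intro!: derivative_eq_intros)
  qed
  have "phi 1 \<le> phi 0"
  proof (rule DERIV_nonpos_imp_nonincreasing[of 0 1 phi])
    fix t :: real assume t: "0 \<le> t" "t \<le> 1"
    have "grad (y + t *\<^sub>R d) \<bullet> d - grad y \<bullet> d = (grad (y + t *\<^sub>R d) - grad y) \<bullet> d"
      by (simp add: inner_diff_left)
    also have "\<dots> \<le> norm (grad (y + t *\<^sub>R d) - grad y) * norm d"
      using norm_cauchy_schwarz by blast
    also have "\<dots> \<le> L * norm (t *\<^sub>R d) * norm d"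
      using lipschitz[of "y + t *\<^sub>R d" y] by (simp add: mult_right_mono)
    also have "\<dots> = L * t * (norm d)\<^sup>2" using t by (simp add: power2_eq_square)
    finally show "\<exists>y. DERIV phi t :> y \<and> y \<le> 0" using der by fastforce
  qed simp
  then show ?thesis unfolding phi_def d_def by simp
qed

lemma norm_axis_shift:
  fixes v :: "real ^ 'n"
  shows "(norm (v + s *\<^sub>R axis i 1))\<^sup>2 = (norm v)\<^sup>2 + 2 * s * (v $ i) + s\<^sup>2"
proof -
  have "(norm (v + s *\<^sub>R axis i 1))\<^sup>2 = v \<bullet> v + 2 * s * (v \<bullet> axis i 1) + s\<^sup>2 * (axis i 1 \<bullet> (axis i (1::real)))"
    unfolding power2_norm_eq_inner by (simp add: inner_add_left inner_add_right inner_commute power2_eq_square algebra_simps)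
  then show ?thesis by (simp add: inner_axis_axis inner_axis power2_norm_eq_inner)
qed

lemma closed_coord_sub: "closed (coord_sub I :: (real ^ 'n) set)"
proof -
  have "coord_sub I = (\<Inter>i\<in>I. {x :: real ^ 'n. x $ i = 0})" unfolding coord_sub_def by auto
  moreover have "closed {x :: real ^ 'n. x $ i = 0}" for i
    by (intro closed_Collect_eq continuous_intros)
  ultimately show ?thesis by auto
qed

lemma coord_sub_ne: "(coord_sub I :: (real ^ 'n) set) \<noteq> {}"
proof -
  have "(0::real^'n) \<in> coord_sub I" unfolding coord_sub_def by simp
  then show ?thesis by blast
qed

theorem lemma4:
  fixes f :: "real ^ 'n \<Rightarrow> real"
    and grad :: "real ^ 'n \<Rightarrow> real ^ 'n"
    and L lam mu :: real
    and x y :: "nat \<Rightarrow> real ^ 'n"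
    and Hm :: "nat \<Rightarrow> real ^ 'n ^ 'n"
    and alpha :: "nat \<Rightarrow> real"
  assumes convex: "convex_on UNIV f"
    and grad: "\<And>z. (f has_derivative (\<lambda>h. grad z \<bullet> h)) (at z)"
    and bdd_below: "\<exists>m. \<forall>z. m \<le> f z"
    and L_pos: "L > 0"
    and lipschitz: "\<And>u v. norm (grad u - grad v) \<le> L * norm (u - v)"
    and lam_pos: "lam > 0"
    and mu_pos: "mu > 0"
    and x_argmin: "\<And>k z.
        lam * real (l0norm (x k)) + L / 2 * (norm (x k - y k + (1 / L) *\<^sub>R grad (y k)))\<^sup>2
          + mu / 2 * (norm (x k - y k))\<^sup>2
        \<le> lam * real (l0norm z) + L / 2 * (norm (z - y k + (1 / L) *\<^sub>R grad (y k)))\<^sup>2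
          + mu / 2 * (norm (z - y k))\<^sup>2"
    and H_sym: "\<And>k. transpose (Hm k) = Hm k"
    and H_pd: "\<And>k v. v \<noteq> 0 \<Longrightarrow> v \<bullet> (Hm k *v v) > 0"
    and alpha_nonneg: "\<And>k. alpha k \<ge> 0"
    and y_next: "\<And>k. y (Suc k) =
        closest_point (coord_sub (zero_idx (x k))) (x k - alpha k *\<^sub>R (Hm k *v grad (x k)))"
    and descent: "\<And>k. f (y (Suc k)) \<le> f (x k)"
  shows "(\<forall>k. f (x (Suc k)) + lam * real (l0norm (x (Suc k)))
              \<le> f (x k) + lam * real (l0norm (x k)))
       \<and> summable (\<lambda>k. (norm (x (Suc k) - y (Suc k)))\<^sup>2)
       \<and> (\<lambda>k. norm (x k - y k)) \<longlonglongrightarrow> 0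
       \<and> (\<exists>K. \<forall>k\<ge>K. zero_idx (x k) = zero_idx (x K))"
proof -
  define c where "c = 1 / L"
  define g where "g k = grad (y k)" for k
  define Hx where "Hx k = f (x k) + lam * real (l0norm (x k))" for k
  define M where "M = L + mu"
  have M_pos: "M > 0" using L_pos mu_pos M_def by simp
  have stepA: "Hx k + mu / 2 * (norm (x k - y k))\<^sup>2 \<le> f (y k) + lam * real (l0norm (y k))" for k
  proof -
    define d where "d = x k - y k"
    have am: "lam * real (l0norm (x k)) + L / 2 * (norm (d + c *\<^sub>R g k))\<^sup>2 + mu / 2 * (norm d)\<^sup>2
        \<le> lam * real (l0norm (y k)) + L / 2 * (norm (c *\<^sub>R g k))\<^sup>2"
      using x_argmin[of k "y k"] unfolding d_def c_def g_def by simp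
    have e1: "(norm (d + c *\<^sub>R g k))\<^sup>2 = (norm d)\<^sup>2 + 2 * c * (g k \<bullet> d) + c\<^sup>2 * (norm (g k))\<^sup>2"
      unfolding power2_norm_eq_inner
      by (simp add: inner_add_left inner_add_right inner_commute power2_eq_square algebra_simps)
    have e2: "(norm (c *\<^sub>R g k))\<^sup>2 = c\<^sup>2 * (norm (g k))\<^sup>2"
      by (simp add: power_mult_distrib)
    have e3: "L / 2 * (2 * c * (g k \<bullet> d)) = g k \<bullet> d" using L_pos unfolding c_def by simp
    have dl: "f (x k) \<le> f (y k) + g k \<bullet> d + L / 2 * (norm d)\<^sup>2"
      using descent_lemma[OF grad lipschitz, of "x k" "y k"] unfolding g_def d_def by simp
    have "lam * real (l0norm (x k)) + L / 2 * (norm d)\<^sup>2 + g k \<bullet> d + mu / 2 * (norm d)\<^sup>2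
        \<le> lam * real (l0norm (y k))"
    proof -
      have Lc: "L * (c * (g k \<bullet> d)) = g k \<bullet> d" using L_pos unfolding c_def by simp
      show ?thesis using am unfolding e1 e2 using Lc by (simp add: algebra_simps)
    qed
    then show ?thesis using dl unfolding Hx_def d_def by linarith
  qed
  have yin: "y (Suc k) \<in> coord_sub (zero_idx (x k))" for k
    unfolding y_next by (rule closest_point_in_set[OF closed_coord_sub coord_sub_ne])
  have yzero: "x k $ i = 0 \<Longrightarrow> y (Suc k) $ i = 0" for k i
    using yin[of k] unfolding coord_sub_def zero_idx_def by auto
  have l0y: "l0norm (y (Suc k)) \<le> l0norm (x k)" for k
    unfolding l0norm_def using yzero[of k] by (intro card_mono) auto
  have stepB: "f (y (Suc k)) + lam * real (l0norm (y (Suc k))) \<le> Hx k" for k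
    using descent[of k] l0y[of k] lam_pos unfolding Hx_def
    by (smt (verit) mult_left_mono of_nat_mono)
  have dec: "Hx (Suc k) + mu / 2 * (norm (x (Suc k) - y (Suc k)))\<^sup>2 \<le> Hx k" for k
    using stepA[of "Suc k"] stepB[of k] by linarith
  have part1: "Hx (Suc k) \<le> Hx k" for k
  proof -
    have "0 \<le> mu / 2 * (norm (x (Suc k) - y (Suc k)))\<^sup>2" using mu_pos by simp
    then show ?thesis using dec[of k] by linarith
  qed
  obtain m where m: "\<forall>z. m \<le> f z" using bdd_below by blast
  have Hx_lb: "\<forall>k. m \<le> Hx k" unfolding Hx_def using m lam_pos by (simp add: add_increasing2)
  have "decseq Hx" using part1 by (simp add: decseq_SucI)
  then obtain HL where HL: "Hx \<longlonglongrightarrow> HL" using decseq_convergent Hx_lb by blast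
  have sumT: "summable (\<lambda>k. (2 / mu) * (Hx k - Hx (Suc k)))"
    by (intro summable_mult telescope_summable'[OF HL])
  have part2: "summable (\<lambda>k. (norm (x (Suc k) - y (Suc k)))\<^sup>2)"
  proof (rule summable_comparison_test'[OF sumT])
    fix k
    have "mu / 2 * (norm (x (Suc k) - y (Suc k)))\<^sup>2 \<le> Hx k - Hx (Suc k)" using dec[of k] by linarith
    hence "(norm (x (Suc k) - y (Suc k)))\<^sup>2 \<le> (2 / mu) * (Hx k - Hx (Suc k))"
      using mu_pos by (simp add: field_simps)
    then show "norm ((norm (x (Suc k) - y (Suc k)))\<^sup>2) \<le> (2 / mu) * (Hx k - Hx (Suc k))" by simp
  qed
  have "(\<lambda>k. (norm (x (Suc k) - y (Suc k)))\<^sup>2) \<longlonglongrightarrow> 0" using summable_LIMSEQ_zero[OF part2] .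
  hence "(\<lambda>k. sqrt ((norm (x (Suc k) - y (Suc k)))\<^sup>2)) \<longlonglongrightarrow> sqrt 0" by (rule tendsto_real_sqrt)
  hence "(\<lambda>k. norm (x (Suc k) - y (Suc k))) \<longlonglongrightarrow> 0" by simp
  hence part3: "(\<lambda>k. norm (x k - y k)) \<longlonglongrightarrow> 0" by (rule LIMSEQ_imp_Suc)
  define \<delta> where "\<delta> = lam / M"
  have \<delta>_pos: "\<delta> > 0" unfolding \<delta>_def using lam_pos M_pos by simp
  have thr: "\<delta> \<le> (x k $ i)\<^sup>2" if nz: "x k $ i \<noteq> 0" for k i
  proof -
    define p where "p = x k $ i"
    define w where "w = x k - y k + c *\<^sub>R g k"
    define v where "v = x k - y k"
    define z0 where "z0 = x k + (- p) *\<^sub>R axis i 1"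
    define z1 where "z1 = x k + p *\<^sub>R axis i 1"
    have s0: "{j. z0 $ j \<noteq> 0} = {j. x k $ j \<noteq> 0} - {i}"
      unfolding z0_def p_def by (auto simp: axis_def)
    have s1: "{j. z1 $ j \<noteq> 0} = {j. x k $ j \<noteq> 0}"
      using nz unfolding z1_def p_def by (auto simp: axis_def)
    have iin: "i \<in> {j. x k $ j \<noteq> 0}" using nz by simp
    have l00: "l0norm z0 = l0norm (x k) - 1" unfolding l0norm_def s0
      using iin by (simp add: card_Diff_singleton)
    have l0pos: "l0norm (x k) \<ge> 1" unfolding l0norm_def using iin
      by (metis One_nat_def Suc_leI card_gt_0_iff empty_iff finite)
    have l0r: "real (l0norm z0) = real (l0norm (x k)) - 1" using l00 l0pos by simp
    have l01: "l0norm z1 = l0norm (x k)" unfolding l0norm_def s1 ..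
    have w0: "z0 - y k + (1 / L) *\<^sub>R grad (y k) = w + (- p) *\<^sub>R axis i 1"
      unfolding z0_def w_def c_def g_def by (simp add: algebra_simps)
    have v0: "z0 - y k = v + (- p) *\<^sub>R axis i 1" unfolding z0_def v_def by (simp add: algebra_simps)
    have w1: "z1 - y k + (1 / L) *\<^sub>R grad (y k) = w + p *\<^sub>R axis i 1"
      unfolding z1_def w_def c_def g_def by (simp add: algebra_simps)
    have v1: "z1 - y k = v + p *\<^sub>R axis i 1" unfolding z1_def v_def by (simp add: algebra_simps)
    have wx: "x k - y k + (1 / L) *\<^sub>R grad (y k) = w" unfolding w_def c_def g_def by simp
    have vx: "x k - y k = v" unfolding v_def ..
    have i0: "lam * real (l0norm (x k)) + L / 2 * (norm w)\<^sup>2 + mu / 2 * (norm v)\<^sup>2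
        \<le> lam * real (l0norm z0) + L / 2 * (norm (w + (- p) *\<^sub>R axis i 1))\<^sup>2
          + mu / 2 * (norm (v + (- p) *\<^sub>R axis i 1))\<^sup>2"
      using x_argmin[of k z0] unfolding w0 wx unfolding v0 vx .
    have i1: "lam * real (l0norm (x k)) + L / 2 * (norm w)\<^sup>2 + mu / 2 * (norm v)\<^sup>2
        \<le> lam * real (l0norm z1) + L / 2 * (norm (w + p *\<^sub>R axis i 1))\<^sup>2
          + mu / 2 * (norm (v + p *\<^sub>R axis i 1))\<^sup>2"
      using x_argmin[of k z1] unfolding w1 wx unfolding v1 vx .
    have a0: "lam \<le> L / 2 * (- 2 * p * (w $ i) + p\<^sup>2) + mu / 2 * (- 2 * p * (v $ i) + p\<^sup>2)"
      using i0 unfolding norm_axis_shift l0r by (simp add: algebra_simps)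
    have a1: "0 \<le> L / 2 * (2 * p * (w $ i) + p\<^sup>2) + mu / 2 * (2 * p * (v $ i) + p\<^sup>2)"
      using i1 unfolding norm_axis_shift l01 by (simp add: algebra_simps)
    have "lam \<le> M * p\<^sup>2" using a0 a1 unfolding M_def by (simp add: algebra_simps)
    then show ?thesis unfolding \<delta>_def p_def using M_pos by (simp add: field_simps)
  qed
  obtain N where N: "\<And>k. k \<ge> N \<Longrightarrow> norm (x k - y k) < sqrt \<delta>"
    using part3 \<delta>_pos unfolding LIMSEQ_def by (metis dist_real_def diff_zero real_sqrt_gt_0_iff abs_norm_cancel)
  have mono_step: "zero_idx (x k) \<subseteq> zero_idx (x (Suc k))" if "k \<ge> N" for k
  proof
    fix i assume "i \<in> zero_idx (x k)"
    hence y0: "y (Suc k) $ i = 0" using yzero unfolding zero_idx_def by auto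
    show "i \<in> zero_idx (x (Suc k))"
    proof (rule ccontr)
      assume "i \<notin> zero_idx (x (Suc k))"
      hence nz: "x (Suc k) $ i \<noteq> 0" unfolding zero_idx_def by simp
      have "\<bar>x (Suc k) $ i\<bar> = \<bar>(x (Suc k) - y (Suc k)) $ i\<bar>" using y0 by simp
      also have "\<dots> \<le> norm (x (Suc k) - y (Suc k))" by (rule component_le_norm_cart)
      also have "\<dots> < sqrt \<delta>" using N[of "Suc k"] that by simp
      finally have "(x (Suc k) $ i)\<^sup>2 < \<delta>"
        using \<delta>_pos by (metis abs_ge_zero real_sqrt_abs real_sqrt_less_iff power2_abs real_sqrt_pow2 less_le)
      with thr[OF nz] show False by simp
    qed
  qed
  have mono: "zero_idx (x k) \<subseteq> zero_idx (x k')" if "N \<le> k" "k \<le> k'" for k k'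
    using that(2)
  proof (induction k' rule: dec_induct)
    case base then show ?case by simp
  next
    case (step j) then show ?case using mono_step[of j] that(1) by auto
  qed
  define cd where "cd k = CARD('n) - card (zero_idx (x k))" for k
  obtain K where K: "K \<ge> N" "\<And>k. k \<ge> N \<Longrightarrow> cd K \<le> cd k"
  proof -
    let ?S = "cd ` {N..}"
    have "?S \<noteq> {}" by auto
    define v where "v = (LEAST u. u \<in> ?S)"
    have v1: "v \<in> ?S" unfolding v_def by (rule LeastI_ex) auto
    have v2: "v \<le> u" if "u \<in> ?S" for u unfolding v_def by (rule Least_le) (rule that)
    note v = v1 v2
    then obtain K where "K \<ge> N" "cd K = v" by auto
    then show ?thesis using that v by auto
  qed
  have part4: "\<forall>k\<ge>K. zero_idx (x k) = zero_idx (x K)"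
  proof (intro allI impI)
    fix k assume "k \<ge> K"
    have sub: "zero_idx (x K) \<subseteq> zero_idx (x k)" using mono K(1) \<open>k \<ge> K\<close> by blast
    have "cd K \<le> cd k" using K \<open>k \<ge> K\<close> by simp
    moreover have "card (zero_idx (x k)) \<le> CARD('n)" "card (zero_idx (x K)) \<le> CARD('n)"
      by (simp_all add: card_mono)
    ultimately have "card (zero_idx (x k)) \<le> card (zero_idx (x K))" unfolding cd_def by simp
    then show "zero_idx (x k) = zero_idx (x K)" using sub
      by (metis card_seteq finite)
  qed
  show ?thesis using part1 part2 part3 part4 unfolding Hx_def by blast
qed

end
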